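(* Let $K\ge1$. Every $L$-layer MinAgg GNN with $L<K$ has nonzero error on the training pair $(H^{(0)}_K,\Gamma^K(H^{(0)}_K))$: there is $w\in\{v_K,u_K\}$ with $h^{(L)}_w(H^{(0)}_K)\ne x_w(\Gamma^K(H^{(0)}_K))$.
   Context: Attributed graphs: $G=(V,E,X_{\mathrm v},X_{\mathrm e})$ with $V$ finite, undirected edges, nonnegative edge weights and nonnegative node features; every node has a self-loop of weight $0$ and $\mathcal N(v)=\{v\}\cup\{u:\{u,v\}\in E\}$. A large constant $\beta>0$ encodes "infinite distance". $x_v(H)$ is the feature of $v$ in $H$. The Bellman–Ford operator $\Gamma$ sends $G$ to the graph with the same vertices, edges and weights and node features $x'_v=\min\{x_u+x_{(u,v)}:u\in\mathcal N(v)\}$; $\Gamma^K$ is its $K$-fold iterate. The graph $H^{(0)}_K$: vertices $v_0,\dots,v_K,u_0,\dots,u_K$; edges $\{v_{i-1},v_i\}$, $\{u_{i-1},u_i\}$, $\{u_{i-1},v_i\}$, $\{v_{i-1},u_i\}$ for $i\in[K]$; weights $1$ on $\{u_{i-1},v_i\}$ and $\{v_{i-1},u_i\}$, $0$ on $\{v_{i-1},v_i\}$ and $\{u_{i-1},u_i\}$; node features $x_{v_0}=0$, $x_w=\beta$ otherwise. MinAgg GNN: for each $\ell\in[L]$, ReLU MLPs ($x^{(j)}=\sigma(W_jx^{(j-1)}+b_j)$) $f^{\mathrm{agg},(\ell)}:\mathbb R^{d_{\ell-1}+1}\to\mathbb R^d$ and $f^{\mathrm{up},(\ell)}:\mathbb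 R^{d+d_{\ell-1}}\to\mathbb R^{d_\ell}$, $d_0=d_L=1$, $d_\ell=d$ otherwise; $h^{(0)}_v=x_v$ and $h^{(\ell)}_v=f^{\mathrm{up},(\ell)}\big(\min_{u\in\mathcal N(v)}f^{\mathrm{agg},(\ell)}(h^{(\ell-1)}_u\oplus x_{(u,v)})\oplus h^{(\ell-1)}_v\big)$ (coordinatewise min, $\oplus$ concatenation). *)

theory Defs
  imports Complex_Main
begin

text \<open>An attributed graph: finite vertex set, undirected edges (as 2-element
sets), nonnegative edge weights, nonnegative scalar node features.
Every node carries an implicit self-loop of weight 0.\<close>

record 'v agraph =
  verts :: "'v set"
  edges :: "'v set set"
  weight :: "'v set \<Rightarrow> real"
  feat :: "'v \<Rightarrow> real"

definition ew :: "('v, 'b) agraph_scheme \<Rightarrow> 'v \<Rightarrow> 'v \<Rightarrow> real" where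
  "ew G u v = (if u = v then 0 else weight G {u, v})"

definition nbhd :: "('v, 'b) agraph_scheme \<Rightarrow> 'v \<Rightarrow> 'v set" where
  "nbhd G v = insert v {u. {u, v} \<in> edges G}"

definition BF :: "('v, 'b) agraph_scheme \<Rightarrow> ('v, 'b) agraph_scheme" where
  "BF G = G\<lparr>feat := (\<lambda>v. Min ((\<lambda>u. feat G u + ew G u v) ` nbhd G v))\<rparr>"

datatype hvert = VV nat | UU nat

definition H0 :: "nat \<Rightarrow> real \<Rightarrow> hvert agraph" where
  "H0 K \<beta> = \<lparr> verts = VV ` {..K} \<union> UU ` {..K},
     edges = (\<Union>i\<in>{1..K}. {{VV (i-1), VV i}, {UU (i-1), UU i},
                            {UU (i-1), VV i}, {VV (i-1), UU i}}),
     weight = (\<lambda>e. if (\<exists>i\<in>{1..K}. e = {UU (i-1), VV i} \<or> e = {VV (i-1), UU i})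
                   then 1 else 0),
     feat = (\<lambda>w. if w = VV 0 then 0 else \<beta>) \<rparr>"

text \<open>A layer is a pair (W, b), W given as a list of rows; a vector is a real list.\<close>
type_synonym mlp = "(real list list \<times> real list) list"

definition relu :: "real \<Rightarrow> real" where
  "relu x = max 0 x"

definition layer_apply :: "real list list \<times> real list \<Rightarrow> real list \<Rightarrow> real list" where
  "layer_apply Wb x = map2 (\<lambda>row bi. relu (sum_list (map2 (*) row x) + bi)) (fst Wb) (snd Wb)"

definition mlp_apply :: "mlp \<Rightarrow> real list \<Rightarrow> real list" where
  "mlp_apply ls x = foldl (\<lambda>y Wb. layer_apply Wb y) x ls"

fun mlp_dims :: "mlp \<Rightarrow> nat \<Rightarrow> nat \<Rightarrow> bool" where
  "mlp_dims [] din dout = (din = dout)"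
| "mlp_dims ((W, b) # ls) din dout =
     (length b = length W \<and> (\<forall>r\<in>set W. length r = din) \<and> mlp_dims ls (length W) dout)"

definition relu_mlp :: "mlp \<Rightarrow> nat \<Rightarrow> nat \<Rightarrow> bool" where
  "relu_mlp ls din dout \<longleftrightarrow> ls \<noteq> [] \<and> mlp_dims ls din dout"

definition gdim :: "nat \<Rightarrow> nat \<Rightarrow> nat \<Rightarrow> nat" where
  "gdim L d l = (if l = 0 \<or> l = L then 1 else d)"

definition minagg_gnn :: "nat \<Rightarrow> nat \<Rightarrow> (nat \<Rightarrow> mlp) \<Rightarrow> (nat \<Rightarrow> mlp) \<Rightarrow> bool" where
  "minagg_gnn L d agg up \<longleftrightarrow>
     (\<forall>l\<in>{1..L}. relu_mlp (agg l) (gdim L d (l - 1) + 1) d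
                \<and> relu_mlp (up l) (d + gdim L d (l - 1)) (gdim L d l))"

fun gnn_h :: "('v, 'b) agraph_scheme \<Rightarrow> nat \<Rightarrow> (nat \<Rightarrow> mlp) \<Rightarrow> (nat \<Rightarrow> mlp)
               \<Rightarrow> nat \<Rightarrow> 'v \<Rightarrow> real list" where
  "gnn_h G d agg up 0 v = [feat G v]"
| "gnn_h G d agg up (Suc l) v =
     mlp_apply (up (Suc l))
       (map (\<lambda>j. Min ((\<lambda>u. mlp_apply (agg (Suc l)) (gnn_h G d agg up l u @ [ew G u v]) ! j)
                        ` nbhd G v)) [0..<d]
        @ gnn_h G d agg up l v)"

end

theory Submission
  imports Defs
begin

fun sw :: "hvert \<Rightarrow> hvert" where
  "sw (VV i) = UU i" | "sw (UU i) = VV i"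

fun idx :: "hvert \<Rightarrow> nat" where
  "idx (VV i) = i" | "idx (UU i) = i"

lemma sw_sw[simp]: "sw (sw x) = x" by (cases x) auto
lemma idx_sw[simp]: "idx (sw x) = idx x" by (cases x) auto

lemma edge_sw1: "{a,b} \<in> edges (H0 K \<beta>) \<Longrightarrow> {sw a, sw b} \<in> edges (H0 K \<beta>)"
  by (auto simp: H0_def doubleton_eq_iff)

lemma edge_sw: "({sw a, sw b} \<in> edges (H0 K \<beta>)) = ({a,b} \<in> edges (H0 K \<beta>))"
  using edge_sw1[of a b] edge_sw1[of "sw a" "sw b"] by auto

lemma weight_sw: "weight (H0 K \<beta>) {sw a, sw b} = weight (H0 K \<beta>) {a, b}"
proof -
  have "(\<exists>i\<in>{1..K}. {sw a, sw b} = {UU (i-1), VV i} \<or> {sw a, sw b} = {VV (i-1), UU i})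
     = (\<exists>i\<in>{1..K}. {a, b} = {UU (i-1), VV i} \<or> {a, b} = {VV (i-1), UU i})"
    by (cases a; cases b; auto simp: doubleton_eq_iff)
  then show ?thesis by (simp add: H0_def)
qed

lemma ew_sw: "ew (H0 K \<beta>) (sw u) (sw v) = ew (H0 K \<beta>) u v"
  by (cases "u = v") (auto simp: ew_def weight_sw dest: arg_cong[where f=sw])

lemma nbhd_sw: "nbhd (H0 K \<beta>) (sw v) = sw ` nbhd (H0 K \<beta>) v"
proof -
  have "{u. {u, sw v} \<in> edges (H0 K \<beta>)} = sw ` {u. {u, v} \<in> edges (H0 K \<beta>)}"
  proof (rule set_eqI, rule iffI)
    fix x assume "x \<in> {u. {u, sw v} \<in> edges (H0 K \<beta>)}"
    then have "{sw x, v} \<in> edges (H0 K \<beta>)" using edge_sw[of x "sw v" K \<beta>] by simp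
    then show "x \<in> sw ` {u. {u, v} \<in> edges (H0 K \<beta>)}" by (intro image_eqI[of _ _ "sw x"]) auto
  next
    fix x assume "x \<in> sw ` {u. {u, v} \<in> edges (H0 K \<beta>)}"
    then show "x \<in> {u. {u, sw v} \<in> edges (H0 K \<beta>)}" using edge_sw by auto
  qed
  then show ?thesis by (simp add: nbhd_def)
qed

lemma edge_idx: "{u,w} \<in> edges (H0 K \<beta>) \<Longrightarrow> idx w \<le> idx u + 1"
  by (auto simp: H0_def doubleton_eq_iff)

lemma nbhd_idx: "u \<in> nbhd (H0 K \<beta>) w \<Longrightarrow> idx w \<le> idx u + 1"
  using edge_idx by (auto simp: nbhd_def)

lemma gnn_sym:
  "l < idx w \<Longrightarrow> gnn_h (H0 K \<beta>) d agg up l (sw w) = gnn_h (H0 K \<beta>) d agg up l w"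
proof (induction l arbitrary: w)
  case 0
  then show ?case by (cases w) (auto simp: H0_def)
next
  case (Suc l)
  let ?H = "H0 K \<beta>"
  have eq: "(\<lambda>u. mlp_apply (agg (Suc l)) (gnn_h ?H d agg up l u @ [ew ?H u (sw w)]) ! j) ` nbhd ?H (sw w)
      = (\<lambda>u. mlp_apply (agg (Suc l)) (gnn_h ?H d agg up l u @ [ew ?H u w]) ! j) ` nbhd ?H w" for j
  proof -
    have "(\<lambda>u. mlp_apply (agg (Suc l)) (gnn_h ?H d agg up l u @ [ew ?H u (sw w)]) ! j) ` nbhd ?H (sw w)
      = (\<lambda>u. mlp_apply (agg (Suc l)) (gnn_h ?H d agg up l (sw u) @ [ew ?H (sw u) (sw w)]) ! j) ` nbhd ?H w"
      by (simp add: nbhd_sw image_image)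
    also have "\<dots> = (\<lambda>u. mlp_apply (agg (Suc l)) (gnn_h ?H d agg up l u @ [ew ?H u w]) ! j) ` nbhd ?H w"
    proof (rule image_cong[OF refl])
      fix u assume "u \<in> nbhd ?H w"
      then have "l < idx u" using nbhd_idx[of u K \<beta> w] Suc.prems by simp
      then show "mlp_apply (agg (Suc l)) (gnn_h ?H d agg up l (sw u) @ [ew ?H (sw u) (sw w)]) ! j
        = mlp_apply (agg (Suc l)) (gnn_h ?H d agg up l u @ [ew ?H u w]) ! j"
        using Suc.IH by (simp add: ew_sw)
    qed
    finally show ?thesis .
  qed
  have "gnn_h ?H d agg up l (sw w) = gnn_h ?H d agg up l w" using Suc by simp
  then show ?case using eq by simp
qed

lemma iter_edges[simp]: "edges ((BF ^^ k) G) = edges G"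
  by (induction k) (auto simp: BF_def)
lemma iter_weight[simp]: "weight ((BF ^^ k) G) = weight G"
  by (induction k) (auto simp: BF_def)
lemma iter_nbhd[simp]: "nbhd ((BF ^^ k) G) = nbhd G"
  by (auto simp: nbhd_def fun_eq_iff)
lemma iter_ew[simp]: "ew ((BF ^^ k) G) = ew G"
  by (auto simp: ew_def fun_eq_iff)
lemma feat_BF: "feat (BF G) v = Min ((\<lambda>u. feat G u + ew G u v) ` nbhd G v)"
  by (simp add: BF_def)

lemma fin_nbhd: "finite (nbhd (H0 K \<beta>) v)"
proof -
  have "finite (edges (H0 K \<beta>))" by (simp add: H0_def)
  moreover have "nbhd (H0 K \<beta>) v \<subseteq> insert v (\<Union> (edges (H0 K \<beta>)))" by (auto simp: nbhd_def)
  moreover have "\<forall>e\<in>edges (H0 K \<beta>). finite e" by (auto simp: H0_def)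
  ultimately show ?thesis by (meson finite_Union finite_insert finite_subset)
qed

lemma self_nbhd: "v \<in> nbhd G v" by (simp add: nbhd_def)

lemma weight_nonneg: "weight (H0 K \<beta>) e \<ge> 0" by (simp add: H0_def)
lemma ew_nonneg: "ew (H0 K \<beta>) u v \<ge> 0" by (simp add: ew_def weight_nonneg)

lemma weight_VU: "{VV a, UU b} \<in> edges (H0 K \<beta>) \<Longrightarrow> weight (H0 K \<beta>) {VV a, UU b} = 1"
  by (auto simp: H0_def doubleton_eq_iff)

lemma ew_VU: "VV a \<in> nbhd (H0 K \<beta>) (UU b) \<Longrightarrow> ew (H0 K \<beta>) (VV a) (UU b) = 1"
  by (auto simp: nbhd_def ew_def weight_VU)

lemma invariant:
  assumes "\<beta> > 0"
  shows "(\<forall>j. feat ((BF ^^ k) (H0 K \<beta>)) (UU j) \<ge> min \<beta> 1) \<and>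
         (\<forall>j. feat ((BF ^^ k) (H0 K \<beta>)) (VV j) \<ge> 0)"
proof (induction k)
  case 0
  then show ?case using assms by (auto simp: H0_def)
next
  case (Suc k)
  let ?G = "(BF ^^ k) (H0 K \<beta>)"
  have c0: "min \<beta> 1 \<ge> 0" using assms by simp
  have all0: "feat ?G u \<ge> 0" for u using Suc c0 by (cases u) (force, metis order_trans)
  have U: "feat (BF ?G) (UU j) \<ge> min \<beta> 1" for j
    unfolding feat_BF iter_nbhd iter_ew
  proof (subst Min_ge_iff)
    show "finite ((\<lambda>u. feat ?G u + ew (H0 K \<beta>) u (UU j)) ` nbhd (H0 K \<beta>) (UU j))"
      using fin_nbhd by blast
    show "(\<lambda>u. feat ?G u + ew (H0 K \<beta>) u (UU j)) ` nbhd (H0 K \<beta>) (UU j) \<noteq> {}"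
      using self_nbhd[of "UU j" "H0 K \<beta>"] by blast
    show "\<forall>a\<in>(\<lambda>u. feat ?G u + ew (H0 K \<beta>) u (UU j)) ` nbhd (H0 K \<beta>) (UU j). min \<beta> 1 \<le> a"
    proof
      fix a assume "a \<in> (\<lambda>u. feat ?G u + ew (H0 K \<beta>) u (UU j)) ` nbhd (H0 K \<beta>) (UU j)"
      then obtain u where u: "u \<in> nbhd (H0 K \<beta>) (UU j)" and a: "a = feat ?G u + ew (H0 K \<beta>) u (UU j)"
        by blast
      show "min \<beta> 1 \<le> a"
      proof (cases u)
        case (VV i)
        then show ?thesis using u a ew_VU[of i K \<beta> j] all0[of u] by simp
      next
        case (UU i)
        have "min \<beta> 1 \<le> feat ?G (UU i)" using Suc.IH by blast
        then show ?thesis using UU a ew_nonneg[of K \<beta> u "UU j"] by simp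
      qed
    qed
  qed
  have V: "feat (BF ?G) (VV j) \<ge> 0" for j
    unfolding feat_BF iter_nbhd iter_ew
  proof (subst Min_ge_iff)
    show "finite ((\<lambda>u. feat ?G u + ew (H0 K \<beta>) u (VV j)) ` nbhd (H0 K \<beta>) (VV j))"
      using fin_nbhd by blast
    show "(\<lambda>u. feat ?G u + ew (H0 K \<beta>) u (VV j)) ` nbhd (H0 K \<beta>) (VV j) \<noteq> {}"
      using self_nbhd[of "VV j" "H0 K \<beta>"] by blast
    show "\<forall>a\<in>(\<lambda>u. feat ?G u + ew (H0 K \<beta>) u (VV j)) ` nbhd (H0 K \<beta>) (VV j). 0 \<le> a"
      using all0 ew_nonneg by (auto intro: add_nonneg_nonneg)
  qed
  show ?case using U V by simp
qed

lemma zero_VV: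
  "\<forall>j. j \<le> k \<and> j \<le> K \<longrightarrow> feat ((BF ^^ k) (H0 K \<beta>)) (VV j) \<le> 0"
proof (induction k)
  case 0
  then show ?case by (simp add: H0_def)
next
  case (Suc k)
  let ?G = "(BF ^^ k) (H0 K \<beta>)"
  show ?case
  proof (intro allI impI)
    fix j assume j: "j \<le> Suc k \<and> j \<le> K"
    have fin: "finite ((\<lambda>u. feat ?G u + ew (H0 K \<beta>) u (VV j)) ` nbhd (H0 K \<beta>) (VV j))"
      using fin_nbhd by blast
    show "feat ((BF ^^ Suc k) (H0 K \<beta>)) (VV j) \<le> 0"
    proof (cases j)
      case 0
      have "feat (BF ?G) (VV j) \<le> feat ?G (VV j) + ew (H0 K \<beta>) (VV j) (VV j)"
        unfolding feat_BF iter_nbhd iter_ew using fin self_nbhd[of "VV j" "H0 K \<beta>"] by (intro Min_le) auto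
      moreover have "feat ?G (VV 0) \<le> 0" using Suc.IH by simp
      ultimately show ?thesis using 0 by (simp add: ew_def)
    next
      case (Suc i)
      have edge: "{VV i, VV j} \<in> edges (H0 K \<beta>)"
        using j Suc by (auto simp: H0_def intro!: bexI[of _ j])
      then have mem: "VV i \<in> nbhd (H0 K \<beta>) (VV j)" by (simp add: nbhd_def)
      have w: "ew (H0 K \<beta>) (VV i) (VV j) = 0"
        using Suc by (auto simp: ew_def H0_def doubleton_eq_iff)
      have "feat (BF ?G) (VV j) \<le> feat ?G (VV i) + ew (H0 K \<beta>) (VV i) (VV j)"
        unfolding feat_BF iter_nbhd iter_ew using fin mem by (intro Min_le) auto
      moreover have "feat ?G (VV i) \<le> 0" using Suc.IH Suc j by simp
      ultimately show ?thesis using w by simp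
    qed
  qed
qed

theorem mainTheorem8:
  fixes K L d :: nat and \<beta> :: real and agg up :: "nat \<Rightarrow> mlp"
  assumes "K \<ge> 1" and "\<beta> > 0" and "1 \<le> L" and "L < K"
    and "minagg_gnn L d agg up"
  shows "\<exists>w\<in>{VV K, UU K}.
           gnn_h (H0 K \<beta>) d agg up L w \<noteq> [feat ((BF ^^ K) (H0 K \<beta>)) w]"
proof (rule ccontr)
  assume "\<not> ?thesis"
  then have a: "gnn_h (H0 K \<beta>) d agg up L (VV K) = [feat ((BF ^^ K) (H0 K \<beta>)) (VV K)]"
    and b: "gnn_h (H0 K \<beta>) d agg up L (UU K) = [feat ((BF ^^ K) (H0 K \<beta>)) (UU K)]" by auto
  have "gnn_h (H0 K \<beta>) d agg up L (sw (VV K)) = gnn_h (H0 K \<beta>) d agg up L (VV K)"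
    using gnn_sym[of L "VV K" K \<beta> d agg up] assms(4) by simp
  then have "feat ((BF ^^ K) (H0 K \<beta>)) (UU K) = feat ((BF ^^ K) (H0 K \<beta>)) (VV K)"
    using a b by simp
  moreover have "feat ((BF ^^ K) (H0 K \<beta>)) (VV K) \<le> 0" using zero_VV by blast
  moreover have "feat ((BF ^^ K) (H0 K \<beta>)) (UU K) \<ge> min \<beta> 1" using invariant assms(2) by blast
  ultimately show False using assms(2) by simp
qed

end
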